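(* Let $\mathbb{K}$ be a field, let $P_1, P_2 \in \mathbb{K}[X]$ be irreducible, let $m \geq 1$, and let $f_m : \mathbb{K}[X]/(P_1^m) \to \mathbb{K}[X]/(P_2^m)$ be a ring isomorphism stabilizing $\mathbb{K}$. Let $R \in \mathbb{K}[X]$ be such that $f_m$ sends the class of $X$ to the class of $R$, and let $Q$ be the remainder of the Euclidean division of $R$ by $P_2$ (which does not depend on the choice of $R$). If $Q' \neq 0$, then the rings $\mathbb{K}[X]/(P_1^n)$ and $\mathbb{K}[X]/(P_2^n)$ are isomorphic for all $n \geq 1$.
   Context: A ring homomorphism $f : A \to B$ between $\mathbb{K}$-algebras stabilizes $\mathbb{K}$ if there is a field automorphism $\sigma_f$ of $\mathbb{K}$ with $f(a) = \sigma_f(a)$ for all $a \in \mathbb{K}$ (with $\mathbb{K}$ identified with its image in $A$ and $B$). $Q'$ denotes the formal derivative of $Q$. *)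

theory Defs
  imports "HOL-Algebra.QuotRing" "HOL-Computational_Algebra.Polynomial"
begin

definition poly_ring :: "'a::field poly ring" where
  "poly_ring = \<lparr>carrier = UNIV, monoid.mult = (*), one = 1, zero = 0, add = (+)\<rparr>"

definition pideal :: "'a::field poly \<Rightarrow> 'a poly set" where
  "pideal P = cgenideal poly_ring P"

definition quot_poly :: "'a::field poly \<Rightarrow> 'a poly set ring" where
  "quot_poly P = poly_ring Quot (pideal P)"

definition pclass :: "'a::field poly \<Rightarrow> 'a poly \<Rightarrow> 'a poly set" where
  "pclass P p = a_r_coset poly_ring (pideal P) p"

definition field_aut :: "('a::field \<Rightarrow> 'a) \<Rightarrow> bool" where
  "field_aut \<sigma> \<longleftrightarrow> bij \<sigma> \<and> (\<forall>a b. \<sigma> (a + b) = \<sigma> a + \<sigma> b) \<and>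
     (\<forall>a b. \<sigma> (a * b) = \<sigma> a * \<sigma> b) \<and> \<sigma> 1 = 1"

definition stabilizes_K :: "'a::field poly \<Rightarrow> 'a poly \<Rightarrow> ('a poly set \<Rightarrow> 'a poly set) \<Rightarrow> bool" where
  "stabilizes_K P1 P2 f \<longleftrightarrow>
     (\<exists>\<sigma>. field_aut \<sigma> \<and> (\<forall>a. f (pclass P1 [:a:]) = pclass P2 [:\<sigma> a:]))"

end

theory Submission
  imports Defs
begin


lemma euclid_bezout:
  fixes a b :: "'a::field poly"
  shows "\<exists>d u v. d = u * a + v * b \<and> d dvd a \<and> d dvd b"
proof (induction b arbitrary: a rule: measure_induct_rule[where f = euclidean_size])
  case (less b)
  show ?case
  proof (cases "b = 0")
    case True
    then show ?thesis by (rule_tac x=a in exI, rule_tac x=1 in exI, rule_tac x=0 in exI) simp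
  next
    case False
    then have "euclidean_size (a mod b) < euclidean_size b" by (rule mod_size_less)
    from less[OF this, of b] obtain d u v where
      d: "d = u * b + v * (a mod b)" "d dvd b" "d dvd a mod b" by blast
    have a: "a = (a div b) * b + a mod b" by simp
    have "d dvd a" using d(2,3) a by (metis dvd_add dvd_mult)
    moreover have "d = v * a + (u - v * (a div b)) * b"
      using d(1) by (simp add: minus_div_mult_eq_mod[symmetric] algebra_simps)
    ultimately show ?thesis using d(2) by blast
  qed
qed

lemma irr_bezout:
  fixes P h :: "'a::field poly"
  assumes "irreducible P" "\<not> P dvd h"
  shows "\<exists>a b. a * h + b * P = 1"
proof -
  obtain d u v where d: "d = u * h + v * P" "d dvd h" "d dvd P"
    using euclid_bezout[of h P] by blast
  from d(3) obtain e where e: "P = d * e" by (auto elim: dvdE)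
  from assms(1) e have "is_unit d \<or> is_unit e" by (simp add: irreducible_def)
  moreover have "\<not> is_unit e"
  proof
    assume "is_unit e"
    then have "P dvd d" using e by (metis dvd_mult_unit_iff dvd_refl)
    then show False using d(2) assms(2) dvd_trans by blast
  qed
  ultimately have "is_unit d" by blast
  then obtain k where k: "1 = d * k" by (auto elim: dvdE)
  show ?thesis
    by (rule_tac x="k*u" in exI, rule_tac x="k*v" in exI) (simp add: k d(1) algebra_simps)
qed

lemma irr_prime:
  fixes P a b :: "'a::field poly"
  assumes "irreducible P" "P dvd a * b" "\<not> P dvd a"
  shows "P dvd b"
proof -
  obtain u v where uv: "u * a + v * P = 1" using irr_bezout[OF assms(1,3)] by blast
  have "b = (u * a + v * P) * b" using uv by simp
  then have b: "b = u * (a * b) + (v * b) * P" by (simp add: algebra_simps)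
  have "P dvd u * (a * b)" using assms(2) by (rule dvd_mult)
  moreover have "P dvd (v * b) * P" by simp
  ultimately have "P dvd u * (a * b) + (v * b) * P" by (rule dvd_add)
  then show ?thesis using b by simp
qed

lemma irr_dvd_power:
  fixes P a :: "'a::field poly"
  assumes "irreducible P" "P dvd a ^ n"
  shows "P dvd a"
  using assms(2)
proof (induction n)
  case 0
  then show ?case using assms(1) by (simp add: irreducible_def)
next
  case (Suc n)
  show ?case
  proof (rule ccontr)
    assume "\<not> P dvd a"
    moreover have "P dvd a * a ^ n" using Suc.prems by simp
    ultimately have "P dvd a ^ n" using irr_prime[OF assms(1)] by blast
    then show False using Suc.IH \<open>\<not> P dvd a\<close> by blast
  qed
qed

lemma irr_bezout_pow:
  fixes P w :: "'a::field poly"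
  assumes "irreducible P" "\<not> P dvd w"
  shows "\<exists>a b. a * w + b * P ^ n = 1"
proof (induction n)
  case 0
  then show ?case by (rule_tac x=0 in exI, rule_tac x=1 in exI) simp
next
  case (Suc n)
  then obtain a b where ab: "a * w + b * P ^ n = 1" by blast
  obtain u v where uv: "u * w + v * P = 1" using irr_bezout[OF assms] by blast
  have "(a * w + b * P ^ n) * (u * w + v * P) = 1" using ab uv by simp
  then have "(a * u * w + a * v * P + b * u * P ^ n) * w + (b * v) * P ^ Suc n = 1"
    by (simp add: algebra_simps)
  then show ?case by blast
qed

lemma irr_pow_cancel:
  fixes P w x :: "'a::field poly"
  assumes "irreducible P" "\<not> P dvd w" "P ^ n dvd w * x"
  shows "P ^ n dvd x"
proof -
  obtain a b where ab: "a * w + b * P ^ n = 1" using irr_bezout_pow[OF assms(1,2)] by blast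
  have "x = (a * w + b * P ^ n) * x" using ab by simp
  then have x: "x = a * (w * x) + (b * x) * P ^ n" by (simp add: algebra_simps)
  have "P ^ n dvd a * (w * x)" using assms(3) by (rule dvd_mult)
  moreover have "P ^ n dvd (b * x) * P ^ n" by simp
  ultimately have "P ^ n dvd a * (w * x) + (b * x) * P ^ n" by (rule dvd_add)
  then show ?thesis using x by simp
qed

lemma degree_pderiv_less:
  fixes P :: "'a::field poly"
  assumes "pderiv P \<noteq> 0"
  shows "degree (pderiv P) < degree P"
proof -
  have c: "coeff (pderiv P) n = 0" if "n > degree P - 1" "degree P \<noteq> 0" for n
  proof -
    have "degree P < Suc n" using that by linarith
    then show ?thesis by (simp add: coeff_pderiv coeff_eq_0)
  qed
  have "degree P \<noteq> 0"
  proof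
    assume "degree P = 0"
    then have "pderiv P = 0" by (intro poly_eqI) (simp add: coeff_pderiv coeff_eq_0)
    then show False using assms by simp
  qed
  moreover have "degree (pderiv P) \<le> degree P - 1"
    using c[OF _ \<open>degree P \<noteq> 0\<close>] by (intro degree_le) auto
  ultimately show ?thesis by linarith
qed

lemma irr_not_dvd_pderiv:
  fixes P :: "'a::field poly"
  assumes "irreducible P" "pderiv P \<noteq> 0"
  shows "\<not> P dvd pderiv P"
proof
  assume "P dvd pderiv P"
  then have "degree P \<le> degree (pderiv P)" using assms(2) by (rule dvd_imp_degree_le)
  then show False using degree_pderiv_less[OF assms(2)] by simp
qed

lemma comp_cong:
  fixes A B M r :: "'a::comm_ring_1 poly"
  assumes "M dvd A - B"
  shows "M dvd pcompose r A - pcompose r B"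
proof (induction r)
  case 0
  then show ?case by simp
next
  case (pCons a p)
  have "pcompose (pCons a p) A - pcompose (pCons a p) B
        = A * (pcompose p A - pcompose p B) + (A - B) * pcompose p B"
    by (simp add: pcompose_pCons algebra_simps)
  then show ?case using pCons assms by (metis dvd_add dvd_mult dvd_mult2)
qed

lemma taylor_aux:
  fixes a A B X Y Z :: "'b::comm_ring_1"
  shows "a + (A + B) * X - (a + A * Y) - B * (Y + A * Z) = (A + B) * (X - Y - B * Z) + B ^ 2 * Z"
  by (simp add: algebra_simps power2_eq_square)

lemma taylor2:
  fixes P A B :: "'a::field poly"
  shows "B ^ 2 dvd pcompose P (A + B) - pcompose P A - B * pcompose (pderiv P) A"
proof (induction P)
  case 0
  then show ?case by simp
next
  case (pCons a p)
  have d: "pcompose (pderiv (pCons a p)) A = pcompose p A + A * pcompose (pderiv p) A"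
    by (simp add: pderiv_pCons pcompose_add pcompose_pCons)
  have "pcompose (pCons a p) (A + B) - pcompose (pCons a p) A - B * pcompose (pderiv (pCons a p)) A
     = (A + B) * (pcompose p (A + B) - pcompose p A - B * pcompose (pderiv p) A)
       + B ^ 2 * pcompose (pderiv p) A"
    unfolding d pcompose_pCons by (rule taylor_aux)
  then show ?case using pCons by (metis dvd_add dvd_mult dvd_triv_left)
qed

lemma pderiv_dvd:
  fixes P A :: "'a::field poly"
  assumes "pderiv P = 0" "P dvd A"
  shows "P dvd pderiv A"
proof -
  from assms(2) obtain c where "A = P * c" by (auto elim: dvdE)
  then have "pderiv A = P * pderiv c" by (simp add: pderiv_mult assms(1))
  then show ?thesis by simp
qed



definition fhom :: "('a::field \<Rightarrow> 'a) \<Rightarrow> bool" where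
  "fhom \<sigma> \<longleftrightarrow> (\<forall>a b. \<sigma> (a + b) = \<sigma> a + \<sigma> b) \<and> (\<forall>a b. \<sigma> (a * b) = \<sigma> a * \<sigma> b) \<and> \<sigma> 1 = 1"

lemma fhom_add: "fhom \<sigma> \<Longrightarrow> \<sigma> (a + b) = \<sigma> a + \<sigma> b" by (simp add: fhom_def)
lemma fhom_mult: "fhom \<sigma> \<Longrightarrow> \<sigma> (a * b) = \<sigma> a * \<sigma> b" by (simp add: fhom_def)
lemma fhom_1: "fhom \<sigma> \<Longrightarrow> \<sigma> 1 = 1" by (simp add: fhom_def)
lemma fhom_0: "fhom \<sigma> \<Longrightarrow> \<sigma> 0 = 0"
proof -
  assume h: "fhom \<sigma>"
  have "\<sigma> 0 + \<sigma> 0 = \<sigma> 0" using fhom_add[OF h, of 0 0] by simp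
  then show ?thesis by (metis add_cancel_right_right)
qed
lemma fhom_uminus: "fhom \<sigma> \<Longrightarrow> \<sigma> (- a) = - \<sigma> a"
proof -
  assume h: "fhom \<sigma>"
  have "\<sigma> a + \<sigma> (- a) = 0" using fhom_add[OF h, of a "- a"] fhom_0[OF h] by simp
  then show ?thesis by (simp add: eq_neg_iff_add_eq_0 add.commute)
qed
lemma fhom_diff: "fhom \<sigma> \<Longrightarrow> \<sigma> (a - b) = \<sigma> a - \<sigma> b"
  using fhom_add[of \<sigma> a "- b"] fhom_uminus[of \<sigma> b] by simp
lemma fhom_of_nat: "fhom \<sigma> \<Longrightarrow> \<sigma> (of_nat n) = of_nat n"
  by (induction n) (simp_all add: fhom_0 fhom_add fhom_1)

lemma field_aut_fhom: "field_aut \<sigma> \<Longrightarrow> fhom \<sigma>"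
  by (simp add: field_aut_def fhom_def)

lemma field_aut_inv_fhom:
  assumes "field_aut \<sigma>" shows "fhom (inv_into UNIV \<sigma>)"
proof -
  have b: "bij \<sigma>" using assms by (simp add: field_aut_def)
  have s: "\<sigma> (inv_into UNIV \<sigma> x) = x" for x using b by (simp add: bij_is_surj surj_f_inv_f)
  have i: "inv_into UNIV \<sigma> (\<sigma> x) = x" for x using b by (simp add: bij_is_inj)
  have h: "fhom \<sigma>" using assms by (rule field_aut_fhom)
  have "inv_into UNIV \<sigma> (a + b) = inv_into UNIV \<sigma> a + inv_into UNIV \<sigma> b" for a b
    by (metis s i fhom_add[OF h])
  moreover have "inv_into UNIV \<sigma> (a * b) = inv_into UNIV \<sigma> a * inv_into UNIV \<sigma> b" for a b
    by (metis s i fhom_mult[OF h])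
  moreover have "inv_into UNIV \<sigma> 1 = 1" by (metis i fhom_1[OF h])
  ultimately show ?thesis by (simp add: fhom_def)
qed

lemma field_aut_inv_right: "field_aut \<sigma> \<Longrightarrow> \<sigma> (inv_into UNIV \<sigma> x) = x"
  by (simp add: field_aut_def bij_is_surj surj_f_inv_f)

lemma mp_add: "fhom \<sigma> \<Longrightarrow> map_poly \<sigma> (p + q) = map_poly \<sigma> p + map_poly \<sigma> q"
  by (intro poly_eqI) (simp add: coeff_map_poly fhom_0 fhom_add)
lemma mp_diff: "fhom \<sigma> \<Longrightarrow> map_poly \<sigma> (p - q) = map_poly \<sigma> p - map_poly \<sigma> q"
  by (intro poly_eqI) (simp add: coeff_map_poly fhom_0 fhom_diff)
lemma mp_const: "fhom \<sigma> \<Longrightarrow> map_poly \<sigma> [:a:] = [:\<sigma> a:]"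
  by (simp add: map_poly_pCons fhom_0)
lemma mp_one: "fhom \<sigma> \<Longrightarrow> map_poly \<sigma> 1 = 1"
  by (simp add: fhom_1)
lemma mp_X: "fhom \<sigma> \<Longrightarrow> map_poly \<sigma> [:0, 1:] = [:0, 1:]"
  by (simp add: map_poly_pCons fhom_0 fhom_1)
lemma mp_mult: "fhom \<sigma> \<Longrightarrow> map_poly \<sigma> (p * q) = map_poly \<sigma> p * map_poly \<sigma> q"
proof (induction p)
  case 0 then show ?case by simp
next
  case (pCons a p)
  have "map_poly \<sigma> (pCons a p * q) = map_poly \<sigma> (smult a q + pCons 0 (p * q))" by simp
  also have "\<dots> = smult (\<sigma> a) (map_poly \<sigma> q) + pCons 0 (map_poly \<sigma> p * map_poly \<sigma> q)"
    using pCons by (simp add: mp_add map_poly_smult fhom_0 fhom_mult map_poly_pCons)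
  also have "\<dots> = map_poly \<sigma> (pCons a p) * map_poly \<sigma> q"
    using pCons by (simp add: map_poly_pCons fhom_0)
  finally show ?case .
qed
lemma mp_power: "fhom \<sigma> \<Longrightarrow> map_poly \<sigma> (p ^ n) = map_poly \<sigma> p ^ n"
  by (induction n) (simp_all add: mp_one mp_mult)
lemma mp_pderiv: "fhom \<sigma> \<Longrightarrow> map_poly \<sigma> (pderiv p) = pderiv (map_poly \<sigma> p)"
proof (intro poly_eqI)
  fix n assume h: "fhom \<sigma>"
  show "coeff (map_poly \<sigma> (pderiv p)) n = coeff (pderiv (map_poly \<sigma> p)) n"
    unfolding coeff_map_poly[of \<sigma>, OF fhom_0[OF h]] coeff_pderiv fhom_mult[OF h] fhom_of_nat[OF h] ..
qed
lemma mp_pcompose: "fhom \<sigma> \<Longrightarrow> map_poly \<sigma> (pcompose p q) = pcompose (map_poly \<sigma> p) (map_poly \<sigma> q)"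
proof (induction p)
  case 0 then show ?case by simp
next
  case (pCons a p)
  then show ?case
    by (simp add: pcompose_pCons mp_add mp_mult mp_const map_poly_pCons fhom_0)
qed
lemma mp_inv:
  assumes "field_aut \<sigma>" shows "map_poly \<sigma> (map_poly (inv_into UNIV \<sigma>) p) = p"
proof -
  have "map_poly \<sigma> (map_poly (inv_into UNIV \<sigma>) p) = map_poly (\<sigma> \<circ> inv_into UNIV \<sigma>) p"
    using fhom_0[OF field_aut_fhom[OF assms]] fhom_0[OF field_aut_inv_fhom[OF assms]]
    by (simp add: map_poly_map_poly)
  also have "\<sigma> \<circ> inv_into UNIV \<sigma> = id" using field_aut_inv_right[OF assms] by (simp add: fun_eq_iff)
  finally show ?thesis by simp
qed

definition psi :: "('a::field \<Rightarrow> 'a) \<Rightarrow> 'a poly \<Rightarrow> 'a poly \<Rightarrow> 'a poly" where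
  "psi \<sigma> S h = pcompose (map_poly \<sigma> h) S"

lemma psi_add: "fhom \<sigma> \<Longrightarrow> psi \<sigma> S (p + q) = psi \<sigma> S p + psi \<sigma> S q"
  by (simp add: psi_def mp_add pcompose_add)
lemma psi_diff: "fhom \<sigma> \<Longrightarrow> psi \<sigma> S (p - q) = psi \<sigma> S p - psi \<sigma> S q"
  by (simp add: psi_def mp_diff pcompose_diff)
lemma psi_mult: "fhom \<sigma> \<Longrightarrow> psi \<sigma> S (p * q) = psi \<sigma> S p * psi \<sigma> S q"
  by (simp add: psi_def mp_mult pcompose_mult)
lemma psi_power: "fhom \<sigma> \<Longrightarrow> psi \<sigma> S (p ^ n) = psi \<sigma> S p ^ n"
  by (induction n) (simp_all add: psi_def mp_one pcompose_1 mp_mult pcompose_mult)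
lemma psi_one: "fhom \<sigma> \<Longrightarrow> psi \<sigma> S 1 = 1"
  by (simp add: psi_def mp_one pcompose_1)
lemma psi_const: "fhom \<sigma> \<Longrightarrow> psi \<sigma> S [:a:] = [:\<sigma> a:]"
  by (simp add: psi_def mp_const)
lemma psi_X: "fhom \<sigma> \<Longrightarrow> psi \<sigma> S [:0, 1:] = S"
  by (simp add: psi_def mp_X pcompose_pCons)
lemma psi_pCons: "fhom \<sigma> \<Longrightarrow> psi \<sigma> S (pCons a p) = [:\<sigma> a:] + S * psi \<sigma> S p"
  by (simp add: psi_def map_poly_pCons fhom_0 pcompose_pCons)
lemma psi_cong: "M dvd S - S' \<Longrightarrow> M dvd psi \<sigma> S h - psi \<sigma> S' h"
  by (simp add: psi_def comp_cong)

lemma psi_comp: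
  assumes "field_aut \<sigma>"
  shows "psi \<sigma> S (pcompose (map_poly (inv_into UNIV \<sigma>) r) T) = pcompose r (psi \<sigma> S T)"
proof -
  have h: "fhom \<sigma>" using assms by (rule field_aut_fhom)
  show ?thesis
    by (simp add: psi_def mp_pcompose[OF h] mp_inv[OF assms] pcompose_assoc)
qed



lemma poly_ring_simps [simp]:
  "carrier poly_ring = UNIV" "monoid.mult poly_ring = (*)" "add poly_ring = (+)"
  "one poly_ring = 1" "zero poly_ring = 0"
  by (simp_all add: poly_ring_def)

lemma poly_cring: "cring (poly_ring :: 'a::field poly ring)"
  unfolding poly_ring_def
  apply unfold_locales
  apply (auto simp: algebra_simps Units_def)
  apply (metis add.right_inverse)
  done

lemma poly_ring_ring: "ring (poly_ring :: 'a::field poly ring)"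
  using poly_cring by (rule cring.axioms)

lemma mem_pideal: "h \<in> pideal P \<longleftrightarrow> P dvd (h :: 'a::field poly)"
  by (auto simp: pideal_def cgenideal_def dvd_def mult.commute)

lemma pideal_ideal: "ideal (pideal (P :: 'a::field poly)) poly_ring"
  unfolding pideal_def by (rule cring.cgenideal_ideal[OF poly_cring]) simp

lemma pclass_eq: "pclass P p = {h + p | h. P dvd h}"
  by (auto simp: pclass_def a_r_coset_def' mem_pideal)

lemma pclass_eq_iff: "pclass P a = pclass P b \<longleftrightarrow> P dvd (a - b :: 'a::field poly)"
proof
  assume "pclass P a = pclass P b"
  then have "a \<in> pclass P b" unfolding pclass_eq by force
  then obtain h where "a = h + b" "P dvd h" unfolding pclass_eq by blast
  then show "P dvd a - b" by simp
next
  assume d: "P dvd a - b"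
  show "pclass P a = pclass P b"
  proof (unfold pclass_eq, safe)
    fix h assume "P dvd h"
    then show "\<exists>h'. h + a = h' + b \<and> P dvd h'"
      using d by (rule_tac x="h + (a - b)" in exI) simp
  next
    fix h assume "P dvd h"
    then show "\<exists>h'. h + b = h' + a \<and> P dvd h'"
      using d by (rule_tac x="h - (a - b)" in exI) simp
  qed
qed

lemma pclass_hom: "pclass (P :: 'a::field poly) \<in> ring_hom poly_ring (quot_poly P)"
proof -
  have "(\<lambda>p. pideal P +>\<^bsub>poly_ring\<^esub> p) \<in> ring_hom poly_ring (poly_ring Quot pideal P)"
    using ideal.rcos_ring_hom[OF pideal_ideal[of P]] by simp
  moreover have "pclass P = (\<lambda>p. pideal P +>\<^bsub>poly_ring\<^esub> p)" by (simp add: fun_eq_iff pclass_def)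
  ultimately show ?thesis by (simp add: quot_poly_def)
qed

lemma quot_cring: "cring (quot_poly (P :: 'a::field poly))"
  unfolding quot_poly_def by (rule ideal.quotient_is_cring[OF pideal_ideal poly_cring])

lemma quot_ring: "ring (quot_poly (P :: 'a::field poly))"
  using quot_cring by (rule cring.axioms)

lemma quot_carrier: "carrier (quot_poly (P :: 'a::field poly)) = range (pclass P)"
  by (auto simp: quot_poly_def FactRing_def A_RCOSETS_def' pclass_def)

lemma pclass_add: "pclass P (a + b) = pclass P a \<oplus>\<^bsub>quot_poly P\<^esub> pclass (P :: 'a::field poly) b"
  using ring_hom_add[OF pclass_hom, of a b P] by simp

lemma pclass_mult: "pclass P (a * b) = pclass P a \<otimes>\<^bsub>quot_poly P\<^esub> pclass (P :: 'a::field poly) b"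
  using ring_hom_mult[OF pclass_hom, of a b P] by simp

lemma pclass_zero: "pclass (P :: 'a::field poly) 0 = \<zero>\<^bsub>quot_poly P\<^esub>"
  using ring_hom_zero[OF pclass_hom poly_ring_ring quot_ring, of P] by simp

lemma pclass_one: "pclass (P :: 'a::field poly) 1 = \<one>\<^bsub>quot_poly P\<^esub>"
  using ring_hom_one[OF pclass_hom, of P] by simp

lemma pclass_carrier: "pclass (P :: 'a::field poly) a \<in> carrier (quot_poly P)"
  by (simp add: quot_carrier)



lemma irr_ne0: "irreducible (P :: 'a::field poly) \<Longrightarrow> P \<noteq> 0"
  by (auto simp: irreducible_def)

lemma irr_not_dvd1: "irreducible (P :: 'a::field poly) \<Longrightarrow> \<not> P dvd 1"
  by (auto simp: irreducible_def)

lemma irr_not_sq_dvd: "irreducible (P :: 'a::field poly) \<Longrightarrow> \<not> P ^ 2 dvd P"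
proof
  assume i: "irreducible P" and d: "P ^ 2 dvd P"
  then have "P * P dvd P * 1" by (simp add: power2_eq_square)
  then have "P dvd 1" using irr_ne0[OF i] by (subst (asm) dvd_times_left_cancel_iff) auto
  then show False using irr_not_dvd1[OF i] by blast
qed

lemma inj1:
  fixes P1 P2 S h :: "'a::field poly"
  assumes h: "fhom \<sigma>" and i1: "irreducible P1" and i2: "irreducible P2"
    and u: "P2 dvd psi \<sigma> S P1" and d: "P2 dvd psi \<sigma> S h"
  shows "P1 dvd h"
proof (rule ccontr)
  assume "\<not> P1 dvd h"
  then obtain a b where ab: "a * h + b * P1 = 1" using irr_bezout[OF i1] by blast
  have "psi \<sigma> S a * psi \<sigma> S h + psi \<sigma> S b * psi \<sigma> S P1 = 1"
    using arg_cong[OF ab, of "psi \<sigma> S"] by (simp add: psi_add[OF h] psi_mult[OF h] psi_one[OF h])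
  moreover have "P2 dvd psi \<sigma> S a * psi \<sigma> S h + psi \<sigma> S b * psi \<sigma> S P1"
    using u d by (simp add: dvd_add)
  ultimately show False using irr_not_dvd1[OF i2] by simp
qed

lemma inj_n:
  fixes P1 P2 S :: "'a::field poly"
  assumes h: "fhom \<sigma>" and i1: "irreducible P1" and i2: "irreducible P2"
    and u: "P2 dvd psi \<sigma> S P1" and u2: "\<not> P2 ^ 2 dvd psi \<sigma> S P1"
  shows "P2 ^ n dvd psi \<sigma> S g \<Longrightarrow> P1 ^ n dvd g"
proof (induction n arbitrary: g)
  case 0 then show ?case by simp
next
  case (Suc n)
  have "P2 dvd psi \<sigma> S g" using Suc.prems by (metis dvd_power dvd_trans zero_less_Suc)
  then have "P1 dvd g" by (rule inj1[OF h i1 i2 u])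
  then obtain g1 where g1: "g = P1 * g1" by (auto elim: dvdE)
  obtain w where w: "psi \<sigma> S P1 = P2 * w" using u by (auto elim: dvdE)
  have nw: "\<not> P2 dvd w"
  proof
    assume "P2 dvd w"
    then have "P2 * P2 dvd P2 * w" by simp
    then show False using u2 w by (simp add: power2_eq_square)
  qed
  have "P2 * P2 ^ n dvd P2 * (w * psi \<sigma> S g1)"
    using Suc.prems by (simp add: g1 psi_mult[OF h] w mult.assoc)
  then have "P2 ^ n dvd w * psi \<sigma> S g1" using irr_ne0[OF i2] by simp
  then have "P2 ^ n dvd psi \<sigma> S g1" by (rule irr_pow_cancel[OF i2 nw])
  then have "P1 ^ n dvd g1" by (rule Suc.IH)
  then show ?case by (simp add: g1)
qed

lemma conv_n:
  fixes P1 P2 S :: "'a::field poly"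
  assumes h: "fhom \<sigma>" and u: "P2 dvd psi \<sigma> S P1" and d: "P1 ^ n dvd g"
  shows "P2 ^ n dvd psi \<sigma> S g"
proof -
  obtain q where q: "g = P1 ^ n * q" using d by (auto elim: dvdE)
  have "psi \<sigma> S g = psi \<sigma> S P1 ^ n * psi \<sigma> S q" by (simp add: q psi_mult[OF h] psi_power[OF h])
  moreover have "P2 ^ n dvd psi \<sigma> S P1 ^ n" using u by (rule dvd_power_same)
  ultimately show ?thesis by simp
qed

lemma surj_n:
  fixes P1 P2 S :: "'a::field poly"
  assumes h: "fhom \<sigma>" and i2: "irreducible P2"
    and u: "P2 dvd psi \<sigma> S P1" and u2: "\<not> P2 ^ 2 dvd psi \<sigma> S P1"
    and s1: "\<And>r. \<exists>h. P2 dvd r - psi \<sigma> S h"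
  shows "\<exists>g. P2 ^ n dvd r - psi \<sigma> S g"
proof (induction n arbitrary: r)
  case 0 then show ?case by simp
next
  case (Suc n)
  obtain w where w: "psi \<sigma> S P1 = P2 * w" using u by (auto elim: dvdE)
  have nw: "\<not> P2 dvd w"
  proof
    assume "P2 dvd w"
    then have "P2 * P2 dvd P2 * w" by simp
    then show False using u2 w by (simp add: power2_eq_square)
  qed
  obtain a b where ab: "a * w + b * P2 ^ n = 1" using irr_bezout_pow[OF i2 nw] by blast
  obtain h0 where "P2 dvd r - psi \<sigma> S h0" using s1 by blast
  then obtain t where t: "r - psi \<sigma> S h0 = P2 * t" by (auto elim: dvdE)
  obtain e where e: "P2 ^ n dvd a * t - psi \<sigma> S e" using Suc.IH by blast
  have eq: "r - psi \<sigma> S (h0 + P1 * e) = P2 * (t * (1 - a * w) + w * (a * t - psi \<sigma> S e))"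
  proof -
    have "r - psi \<sigma> S (h0 + P1 * e) = (r - psi \<sigma> S h0) - P2 * w * psi \<sigma> S e"
      by (simp add: psi_add[OF h] psi_mult[OF h] w)
    also have "\<dots> = P2 * (t * (1 - a * w) + w * (a * t - psi \<sigma> S e))"
      by (simp add: t algebra_simps)
    finally show ?thesis .
  qed
  have "1 - a * w = b * P2 ^ n" using ab by (simp add: algebra_simps)
  then have "P2 ^ n dvd t * (1 - a * w)" by simp
  moreover have "P2 ^ n dvd w * (a * t - psi \<sigma> S e)" using e by (rule dvd_mult)
  ultimately have "P2 ^ n dvd t * (1 - a * w) + w * (a * t - psi \<sigma> S e)" by (rule dvd_add)
  then have "P2 * P2 ^ n dvd P2 * (t * (1 - a * w) + w * (a * t - psi \<sigma> S e))" by simp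
  then show ?case unfolding eq[symmetric] by (rule_tac x="h0 + P1 * e" in exI) simp
qed

lemma core_iso:
  fixes P1 P2 S :: "'a::field poly"
  assumes h: "fhom \<sigma>" and i1: "irreducible P1" and i2: "irreducible P2"
    and u: "P2 dvd psi \<sigma> S P1" and u2: "\<not> P2 ^ 2 dvd psi \<sigma> S P1"
    and s1: "\<And>r. \<exists>h. P2 dvd r - psi \<sigma> S h"
  shows "quot_poly (P1 ^ n) \<simeq> quot_poly (P2 ^ n)"
proof -
  define \<phi> where "\<phi> = (\<lambda>g. pclass (P2 ^ n) (psi \<sigma> S g))"
  have hom: "\<phi> \<in> ring_hom poly_ring (quot_poly (P2 ^ n))"
  proof (rule ring_hom_memI)
    fix x show "\<phi> x \<in> carrier (quot_poly (P2 ^ n))" by (simp add: \<phi>_def pclass_carrier)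
  next
    fix x y show "\<phi> (x \<otimes>\<^bsub>poly_ring\<^esub> y) = \<phi> x \<otimes>\<^bsub>quot_poly (P2 ^ n)\<^esub> \<phi> y"
      by (simp add: \<phi>_def psi_mult[OF h] pclass_mult)
  next
    fix x y show "\<phi> (x \<oplus>\<^bsub>poly_ring\<^esub> y) = \<phi> x \<oplus>\<^bsub>quot_poly (P2 ^ n)\<^esub> \<phi> y"
      by (simp add: \<phi>_def psi_add[OF h] pclass_add)
  next
    show "\<phi> \<one>\<^bsub>poly_ring\<^esub> = \<one>\<^bsub>quot_poly (P2 ^ n)\<^esub>"
      by (simp add: \<phi>_def psi_one[OF h] pclass_one)
  qed
  have rhr: "ring_hom_ring poly_ring (quot_poly (P2 ^ n)) \<phi>"
    by (rule ring_hom_ringI2[OF poly_ring_ring quot_ring hom])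
  have surj: "\<phi> ` carrier poly_ring = carrier (quot_poly (P2 ^ n))"
  proof (auto simp: quot_carrier \<phi>_def)
    fix r
    obtain g where "P2 ^ n dvd r - psi \<sigma> S g" using surj_n[OF h i2 u u2 s1] by blast
    then have "pclass (P2 ^ n) r = pclass (P2 ^ n) (psi \<sigma> S g)" by (simp add: pclass_eq_iff)
    then show "pclass (P2 ^ n) r \<in> range (\<lambda>g. pclass (P2 ^ n) (psi \<sigma> S g))" by auto
  qed
  have ker: "a_kernel poly_ring (quot_poly (P2 ^ n)) \<phi> = pideal (P1 ^ n)"
  proof -
    have "\<phi> g = \<zero>\<^bsub>quot_poly (P2 ^ n)\<^esub> \<longleftrightarrow> P1 ^ n dvd g" for g
    proof -
      have "\<phi> g = \<zero>\<^bsub>quot_poly (P2 ^ n)\<^esub> \<longleftrightarrow> P2 ^ n dvd psi \<sigma> S g"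
        by (simp add: \<phi>_def pclass_zero[symmetric] pclass_eq_iff)
      also have "\<dots> \<longleftrightarrow> P1 ^ n dvd g"
        using inj_n[OF h i1 i2 u u2] conv_n[OF h u] by blast
      finally show ?thesis .
    qed
    then show ?thesis by (auto simp: a_kernel_def' mem_pideal)
  qed
  have "poly_ring Quot (a_kernel poly_ring (quot_poly (P2 ^ n)) \<phi>) \<simeq> quot_poly (P2 ^ n)"
    by (rule ring_hom_ring.FactRing_iso[OF rhr surj])
  then have "poly_ring Quot (pideal (P1 ^ n)) \<simeq> quot_poly (P2 ^ n)" by (simp only: ker)
  then show ?thesis by (simp only: quot_poly_def)
qed



lemma dvd_sub_cancel1: "M dvd x - y \<Longrightarrow> M dvd y \<Longrightarrow> M dvd (x::'b::comm_ring_1)"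
  using dvd_add[of M "x - y" y] by simp

lemma dvd_sub_cancel2: "M dvd x - y \<Longrightarrow> M dvd x \<Longrightarrow> M dvd (y::'b::comm_ring_1)"
  using dvd_diff[of M x "x - y"] by simp

lemma back_comp:
  fixes P2 R T r :: "'a::field poly"
  assumes a: "field_aut \<sigma>" and d: "P2 dvd [:0, 1:] - psi \<sigma> R T"
  shows "P2 dvd r - psi \<sigma> R (pcompose (map_poly (inv_into UNIV \<sigma>) r) T)"
  using comp_cong[OF d, of r] by (simp add: psi_comp[OF a])

lemma find_S:
  fixes P1 P2 R :: "'a::field poly"
  assumes a: "field_aut \<sigma>" and i1: "irreducible P1" and i2: "irreducible P2"
    and u: "P2 dvd psi \<sigma> R P1" and s1: "\<And>r. \<exists>h. P2 dvd r - psi \<sigma> R h"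
  shows "\<exists>S. P2 dvd S - R \<and> P2 dvd psi \<sigma> S P1 \<and> \<not> P2 ^ 2 dvd psi \<sigma> S P1"
proof -
  have h: "fhom \<sigma>" using a by (rule field_aut_fhom)
  have hi: "fhom (inv_into UNIV \<sigma>)" using a by (rule field_aut_inv_fhom)
  obtain T where T: "P2 dvd [:0, 1:] - psi \<sigma> R T" using s1 by blast
  show ?thesis
  proof (cases "pderiv P2 = 0")
    case True
    have "\<not> P2 ^ 2 dvd psi \<sigma> R P1"
    proof
      assume sq: "P2 ^ 2 dvd psi \<sigma> R P1"
      obtain k where k: "[:0, 1:] - psi \<sigma> R T = P2 * k" using T by (auto elim: dvdE)
      define B where "B = psi \<sigma> R T - [:0, 1:]"
      have B: "B = P2 * (- k)" using k by (simp add: B_def algebra_simps)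
      have "B ^ 2 dvd pcompose P2 ([:0, 1:] + B) - pcompose P2 [:0, 1:] - B * pcompose (pderiv P2) [:0, 1:]"
        by (rule taylor2)
      then have "B ^ 2 dvd pcompose P2 (psi \<sigma> R T) - P2" using True by (simp add: B_def)
      moreover have "P2 ^ 2 dvd B ^ 2" by (simp add: B power_mult_distrib)
      ultimately have d1: "P2 ^ 2 dvd pcompose P2 (psi \<sigma> R T) - P2" using dvd_trans by blast
      define V where "V = pcompose (map_poly (inv_into UNIV \<sigma>) P2) T"
      have psiV: "psi \<sigma> R V = pcompose P2 (psi \<sigma> R T)" by (simp add: V_def psi_comp[OF a])
      have "P2 dvd P2 ^ 2" by (simp add: power2_eq_square)
      then have "P2 dvd pcompose P2 (psi \<sigma> R T) - P2" using d1 dvd_trans by blast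
      then have "P2 dvd psi \<sigma> R V" unfolding psiV by (rule dvd_sub_cancel1) simp
      then have "P1 dvd V" by (rule inj1[OF h i1 i2 u])
      then obtain V1 where "V = P1 * V1" by (auto elim: dvdE)
      then have "P2 ^ 2 dvd psi \<sigma> R V" using sq by (simp add: psi_mult[OF h])
      then have "P2 ^ 2 dvd psi \<sigma> R V - (pcompose P2 (psi \<sigma> R T) - P2)" using d1 by (rule dvd_diff)
      then have "P2 ^ 2 dvd P2" by (simp add: psiV)
      then show False using irr_not_sq_dvd[OF i2] by blast
    qed
    then show ?thesis using u by (rule_tac x=R in exI) simp
  next
    case False
    note P2d = False
    show ?thesis
    proof (cases "pderiv P1 = 0")
      case False
      define D where "D = psi \<sigma> R (pderiv P1)"
      have D: "D = pcompose (pderiv (map_poly \<sigma> P1)) R" by (simp add: D_def psi_def mp_pderiv[OF h])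
      obtain a b where ab: "a * pderiv P1 + b * P1 = 1"
        using irr_bezout[OF i1 irr_not_dvd_pderiv[OF i1 False]] by blast
      have "psi \<sigma> R a * D + psi \<sigma> R b * psi \<sigma> R P1 = 1"
        using arg_cong[OF ab, of "psi \<sigma> R"] by (simp add: D_def psi_add[OF h] psi_mult[OF h] psi_one[OF h])
      then have nD: "\<not> P2 dvd D"
      proof (intro notI)
        assume e: "psi \<sigma> R a * D + psi \<sigma> R b * psi \<sigma> R P1 = 1" and "P2 dvd D"
        have "P2 dvd psi \<sigma> R a * D + psi \<sigma> R b * psi \<sigma> R P1"
          using dvd_add[OF dvd_mult[OF \<open>P2 dvd D\<close>, of "psi \<sigma> R a"] dvd_mult[OF u, of "psi \<sigma> R b"]] .
        then show False using e irr_not_dvd1[OF i2] by simp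
      qed
      show ?thesis
      proof (cases "P2 ^ 2 dvd psi \<sigma> R P1")
        case False
        then show ?thesis using u by (rule_tac x=R in exI) simp
      next
        case True
        have t: "P2 ^ 2 dvd psi \<sigma> (R + P2) P1 - psi \<sigma> R P1 - P2 * D"
          using taylor2[where P="map_poly \<sigma> P1" and A=R and B=P2] by (simp add: D psi_def)
        then have t2: "P2 ^ 2 dvd psi \<sigma> (R + P2) P1 - P2 * D"
          using dvd_add[OF t True] by (simp add: algebra_simps)
        have "P2 dvd P2 ^ 2" by (simp add: power2_eq_square)
        then have "P2 dvd psi \<sigma> (R + P2) P1 - P2 * D" using t2 dvd_trans by blast
        then have d1: "P2 dvd psi \<sigma> (R + P2) P1" by (rule dvd_sub_cancel1) simp
        have d2: "\<not> P2 ^ 2 dvd psi \<sigma> (R + P2) P1"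
        proof
          assume "P2 ^ 2 dvd psi \<sigma> (R + P2) P1"
          then have "P2 ^ 2 dvd P2 * D" using t2 by (rule_tac dvd_sub_cancel2) auto
          then have "P2 * P2 dvd P2 * D" by (simp add: power2_eq_square)
          then have "P2 dvd D" using irr_ne0[OF i2] by simp
          then show False using nD by blast
        qed
        show ?thesis using d1 d2 by (rule_tac x="R + P2" in exI) simp
      qed
    next
      case True
      note P1d = True
      have False
      proof -
        define V where "V = pcompose (map_poly (inv_into UNIV \<sigma>) P2) T"
        have "P2 dvd P2 - psi \<sigma> R V" unfolding V_def by (rule back_comp[OF a T])
        then have "P2 dvd psi \<sigma> R V" by (rule dvd_sub_cancel2) simp
        then have "P1 dvd V" by (rule inj1[OF h i1 i2 u])
        then have "P1 dvd pderiv V" by (rule pderiv_dvd[OF P1d])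
        moreover have "pderiv V = pcompose (map_poly (inv_into UNIV \<sigma>) (pderiv P2)) T * pderiv T"
          by (simp add: V_def pderiv_pcompose mp_pderiv[OF hi])
        ultimately have "P1 dvd pcompose (map_poly (inv_into UNIV \<sigma>) (pderiv P2)) T * pderiv T" by simp
        then have "P2 dvd psi \<sigma> R (pcompose (map_poly (inv_into UNIV \<sigma>) (pderiv P2)) T * pderiv T)"
          using conv_n[OF h u, of 1] by simp
        then have d: "P2 dvd psi \<sigma> R (pcompose (map_poly (inv_into UNIV \<sigma>) (pderiv P2)) T) * psi \<sigma> R (pderiv T)"
          by (simp add: psi_mult[OF h])
        have c: "P2 dvd pderiv P2 - psi \<sigma> R (pcompose (map_poly (inv_into UNIV \<sigma>) (pderiv P2)) T)"
          by (rule back_comp[OF a T])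
        have "\<not> P2 dvd psi \<sigma> R (pcompose (map_poly (inv_into UNIV \<sigma>) (pderiv P2)) T)"
        proof
          assume "P2 dvd psi \<sigma> R (pcompose (map_poly (inv_into UNIV \<sigma>) (pderiv P2)) T)"
          then have "P2 dvd pderiv P2" using c by (rule_tac dvd_sub_cancel1) auto
          then show False using irr_not_dvd_pderiv[OF i2 P2d] by blast
        qed
        then have "P2 dvd psi \<sigma> R (pderiv T)" using d irr_prime[OF i2] by blast
        then have pT: "P1 dvd pderiv T" by (rule inj1[OF h i1 i2 u])
        define W where "W = pcompose (map_poly (inv_into UNIV \<sigma>) R) T"
        have "P2 dvd R - psi \<sigma> R W" unfolding W_def by (rule back_comp[OF a T])
        then have "P2 dvd psi \<sigma> R ([:0, 1:] - W)" by (simp add: psi_diff[OF h] psi_X[OF h])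
        then have "P1 dvd [:0, 1:] - W" by (rule inj1[OF h i1 i2 u])
        then have "P1 dvd pderiv ([:0, 1:] - W)" by (rule pderiv_dvd[OF P1d])
        moreover have "pderiv ([:0, 1:] - W) = 1 - pcompose (pderiv (map_poly (inv_into UNIV \<sigma>) R)) T * pderiv T"
          by (simp add: W_def pderiv_diff pderiv_pcompose pderiv_pCons)
        moreover have "P1 dvd pcompose (pderiv (map_poly (inv_into UNIV \<sigma>) R)) T * pderiv T"
          using pT by simp
        ultimately have "P1 dvd 1" by (metis dvd_sub_cancel1)
        then show False using irr_not_dvd1[OF i1] by blast
      qed
      then show ?thesis ..
    qed
  qed
qed



lemma pCons_X: "pCons a (h :: 'a::field poly) = [:a:] + [:0, 1:] * h"
  by (simp add: mult_pCons_left)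

theorem mainTheorem15:
  fixes P1 P2 R :: "'a::field poly" and m :: nat and f :: "'a poly set \<Rightarrow> 'a poly set"
  assumes "irreducible P1" and "irreducible P2" and "m \<ge> 1"
    and "f \<in> ring_iso (quot_poly (P1 ^ m)) (quot_poly (P2 ^ m))"
    and "stabilizes_K (P1 ^ m) (P2 ^ m) f"
    and "f (pclass (P1 ^ m) [:0, 1:]) = pclass (P2 ^ m) R"
    and "pderiv (R mod P2) \<noteq> 0"
  shows "\<forall>n\<ge>1. quot_poly (P1 ^ n) \<simeq> quot_poly (P2 ^ n)"
proof -
  note i1 = assms(1) and i2 = assms(2)
  obtain \<sigma> where a: "field_aut \<sigma>" and fK: "\<And>c. f (pclass (P1 ^ m) [:c:]) = pclass (P2 ^ m) [:\<sigma> c:]"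
    using assms(5) unfolding stabilizes_K_def by blast
  have h: "fhom \<sigma>" using a by (rule field_aut_fhom)
  have fh: "f \<in> ring_hom (quot_poly (P1 ^ m)) (quot_poly (P2 ^ m))"
    and fb: "bij_betw f (carrier (quot_poly (P1 ^ m))) (carrier (quot_poly (P2 ^ m)))"
    using assms(4) by (auto simp: ring_iso_def)
  have f0: "f (pclass (P1 ^ m) 0) = pclass (P2 ^ m) 0"
    using ring_hom_zero[OF fh quot_ring quot_ring] by (simp add: pclass_zero)
  have form: "f (pclass (P1 ^ m) g) = pclass (P2 ^ m) (psi \<sigma> R g)" for g
  proof (induction g)
    case 0 then show ?case using f0 by (simp add: psi_def)
  next
    case (pCons c g)
    have c: "pclass (P1 ^ m) [:0, 1:] \<otimes>\<^bsub>quot_poly (P1 ^ m)\<^esub> pclass (P1 ^ m) g \<in> carrier (quot_poly (P1 ^ m))"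
      by (simp only: pclass_mult[symmetric] pclass_carrier)
    have "f (pclass (P1 ^ m) (pCons c g))
        = f (pclass (P1 ^ m) [:c:] \<oplus>\<^bsub>quot_poly (P1 ^ m)\<^esub>
             (pclass (P1 ^ m) [:0, 1:] \<otimes>\<^bsub>quot_poly (P1 ^ m)\<^esub> pclass (P1 ^ m) g))"
      unfolding pCons_X[of c g] by (simp only: pclass_add pclass_mult)
    also have "\<dots> = f (pclass (P1 ^ m) [:c:]) \<oplus>\<^bsub>quot_poly (P2 ^ m)\<^esub>
             (f (pclass (P1 ^ m) [:0, 1:]) \<otimes>\<^bsub>quot_poly (P2 ^ m)\<^esub> f (pclass (P1 ^ m) g))"
      by (simp only: ring_hom_add[OF fh pclass_carrier c] ring_hom_mult[OF fh pclass_carrier pclass_carrier])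
    also have "\<dots> = pclass (P2 ^ m) ([:\<sigma> c:] + R * psi \<sigma> R g)"
      by (simp only: fK assms(6) pCons.IH pclass_add pclass_mult)
    also have "\<dots> = pclass (P2 ^ m) (psi \<sigma> R (pCons c g))"
      by (simp add: psi_pCons[OF h])
    finally show ?case .
  qed
  have P2m: "P2 dvd P2 ^ m" using assms(3) by (simp add: dvd_power)
  have u: "P2 dvd psi \<sigma> R P1"
  proof -
    have "pclass (P1 ^ m) (P1 ^ m) = pclass (P1 ^ m) 0" by (simp add: pclass_eq_iff)
    then have "pclass (P2 ^ m) (psi \<sigma> R (P1 ^ m)) = pclass (P2 ^ m) 0"
      using form[of "P1 ^ m"] f0 by simp
    then have "P2 ^ m dvd psi \<sigma> R P1 ^ m" by (simp add: pclass_eq_iff psi_power[OF h])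
    then have "P2 dvd psi \<sigma> R P1 ^ m" using P2m dvd_trans by blast
    then show ?thesis by (rule irr_dvd_power[OF i2])
  qed
  have s1: "\<exists>g. P2 dvd r - psi \<sigma> R g" for r
  proof -
    have "pclass (P2 ^ m) r \<in> carrier (quot_poly (P2 ^ m))" by (rule pclass_carrier)
    then have "pclass (P2 ^ m) r \<in> f ` carrier (quot_poly (P1 ^ m))"
      using fb by (simp add: bij_betw_def)
    then obtain g where "pclass (P2 ^ m) r = f (pclass (P1 ^ m) g)" by (auto simp: quot_carrier)
    then have "P2 ^ m dvd r - psi \<sigma> R g" by (simp add: form pclass_eq_iff)
    then show ?thesis using P2m dvd_trans by blast
  qed
  obtain S where S: "P2 dvd S - R" "P2 dvd psi \<sigma> S P1" "\<not> P2 ^ 2 dvd psi \<sigma> S P1"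
    using find_S[OF a i1 i2 u s1] by blast
  have sS: "\<exists>g. P2 dvd r - psi \<sigma> S g" for r
  proof -
    obtain g where g: "P2 dvd r - psi \<sigma> R g" using s1 by blast
    have "P2 dvd psi \<sigma> S g - psi \<sigma> R g" using S(1) by (rule psi_cong)
    then have "P2 dvd (r - psi \<sigma> R g) - (psi \<sigma> S g - psi \<sigma> R g)" using g by (rule_tac dvd_diff) auto
    then show ?thesis by (rule_tac x=g in exI) (simp add: algebra_simps)
  qed
  show ?thesis using core_iso[OF h i1 i2 S(2) S(3) sS] by blast
qed

end
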